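(* Let $\mathcal{U}$ be the map $(\beta,u)\mapsto\mathcal{U}(\beta,u)=\int_0^1\mathcal{K}(\beta)(1-y)u(y)\,dy\in\mathbb{R}$, defined on pairs $(\beta,u)$ of continuous functions on $[0,1]$. For arbitrary $B_\beta,B_u>0$, $\mathcal U$ is Lipschitz on the set of pairs of Lipschitz functions with $\|\beta\|_\infty\le B_\beta$, $\|u\|_\infty\le B_u$: for any two such pairs, $$|\mathcal U(\beta_1,u_1)-\mathcal U(\beta_2,u_2)|\le\big(B_\beta e^{B_\beta}+B_ue^{3B_\beta}\big)\,\|(\beta_1-\beta_2,u_1-u_2)\|_\infty,$$ where $\|(a,b)\|_\infty=\max(\|a\|_\infty,\|b\|_\infty)$.
   Context: The backstepping kernel operator $\mathcal{K}$ maps $\beta\in C^0[0,1]$ to the solution $k$ of $k(x)=-\beta(x)+\int_0^x\beta(x-y)k(y)\,dy$, $x\in[0,1]$. $\|\cdot\|_\infty$ is the supremum norm on $[0,1]$. *)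

theory Defs
  imports "HOL-Analysis.Analysis"
begin

definition supnorm :: "(real \<Rightarrow> real) \<Rightarrow> real" where
  "supnorm f = (SUP x\<in>{0..1}. \<bar>f x\<bar>)"

text \<open>Backstepping kernel operator: the continuous solution k on [0,1] of
  k(x) = -beta(x) + integral_0^x beta(x-y) k(y) dy; normalised to 0 outside [0,1]
  so that it is uniquely determined.\<close>
definition kernel_op :: "(real \<Rightarrow> real) \<Rightarrow> (real \<Rightarrow> real)" where
  "kernel_op \<beta> = (THE k. continuous_on {0..1} k \<and>
      (\<forall>x\<in>{0..1}. k x = - \<beta> x + integral {0..x} (\<lambda>y. \<beta> (x - y) * k y)) \<and>
      (\<forall>x. x \<notin> {0..1} \<longrightarrow> k x = 0))"

definition U_op :: "(real \<Rightarrow> real) \<Rightarrow> (real \<Rightarrow> real) \<Rightarrow> real" where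
  "U_op \<beta> u = integral {0..1} (\<lambda>y. kernel_op \<beta> (1 - y) * u y)"

end

theory Submission
  imports Defs
begin

lemma supnorm_ge:
  assumes "continuous_on {0..1} f" "x \<in> {0..1}"
  shows "\<bar>f x\<bar> \<le> supnorm f"
proof -
  have "continuous_on {0..1} (\<lambda>x. \<bar>f x\<bar>)" using assms(1) by (intro continuous_intros)
  then have "compact ((\<lambda>x. \<bar>f x\<bar>) ` {0..1::real})" by (intro compact_continuous_image) auto
  then have "bdd_above ((\<lambda>x. \<bar>f x\<bar>) ` {0..1::real})"
    by (intro bounded_imp_bdd_above compact_imp_bounded)
  then show ?thesis unfolding supnorm_def using assms(2) by (intro cSUP_upper) auto
qed

lemma supnorm_nonneg:
  assumes "continuous_on {0..1} f"
  shows "0 \<le> supnorm f"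
  using supnorm_ge[OF assms, of 0] by simp

lemma gronwall:
  fixes d :: "real \<Rightarrow> real"
  assumes cd: "continuous_on {0..1} d" and a: "a \<ge> 0" and B: "B \<ge> 0"
    and h: "\<And>x. x \<in> {0..1} \<Longrightarrow> d x \<le> a + B * integral {0..x} d"
    and x: "x \<in> {0..1}"
  shows "d x \<le> a * exp (B * x)"
proof -
  define I where "I = (\<lambda>x. integral {0..x} d)"
  define \<phi> where "\<phi> = (\<lambda>x. exp (- B * x) * (a + B * I x))"
  have cI: "continuous_on {0..1} I" unfolding I_def
    by (intro indefinite_integral_continuous_1 integrable_continuous_interval cd)
  have c\<phi>: "continuous_on {0..1} \<phi>" unfolding \<phi>_def by (intro continuous_intros cI)
  have "\<phi> 0 \<ge> \<phi> x"
  proof (rule DERIV_nonpos_imp_decreasing_open[of 0 x \<phi>])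
    show "0 \<le> x" using x by simp
    show "continuous_on {0..x} \<phi>" using x by (intro continuous_on_subset[OF c\<phi>]) auto
    fix t assume t: "0 < t" "t < x"
    have dI: "(I has_real_derivative d t) (at t)"
    proof -
      have "(I has_real_derivative d t) (at t within {0..1})" unfolding I_def
        using t x by (intro integral_has_real_derivative cd) auto
      moreover have "at t within {0..1} = at t" using t x by (intro at_within_Icc_at) auto
      ultimately show ?thesis by simp
    qed
    have "(\<phi> has_real_derivative
        (exp (- B * t) * (- B)) * (a + B * I t) + exp (- B * t) * (B * d t)) (at t)"
      unfolding \<phi>_def by (auto intro!: derivative_eq_intros dI)
    moreover have "(exp (- B * t) * (- B)) * (a + B * I t) + exp (- B * t) * (B * d t) \<le> 0"
    proof -
      have "d t \<le> a + B * I t" using h[of t] t x unfolding I_def by auto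
      then have "B * d t \<le> B * (a + B * I t)" using B by (rule mult_left_mono)
      then have "exp (- B * t) * (B * d t) \<le> exp (- B * t) * (B * (a + B * I t))"
        by (rule mult_left_mono) simp
      then show ?thesis by (simp add: algebra_simps)
    qed
    ultimately show "\<exists>y. (\<phi> has_real_derivative y) (at t) \<and> y \<le> 0" by blast
  qed
  then have "\<phi> x \<le> a" unfolding \<phi>_def I_def by simp
  have "d x \<le> a + B * I x" using h[OF x] unfolding I_def .
  also have "\<dots> = exp (B * x) * \<phi> x" unfolding \<phi>_def by (simp add: exp_minus field_simps)
  also have "\<dots> \<le> exp (B * x) * a" using \<open>\<phi> x \<le> a\<close> by (intro mult_left_mono) auto
  finally show ?thesis by (simp add: mult.commute)
qed

definition Iop :: "(real \<Rightarrow> real) \<Rightarrow> (real \<Rightarrow> real) \<Rightarrow> real \<Rightarrow> real" where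
  "Iop \<beta> h x = integral {0..x} (\<lambda>y. \<beta> (x - y) * h y)"

lemma cont_shift:
  fixes \<beta> :: "real \<Rightarrow> real"
  assumes "continuous_on {0..1} \<beta>" "x \<in> {0..1::real}"
  shows "continuous_on {0..x} (\<lambda>y. \<beta> (x - y))"
  by (rule continuous_on_compose2[OF assms(1), of "{0..x}" "\<lambda>y. x - y"])
     (use assms(2) in \<open>auto intro!: continuous_intros\<close>)

lemma cont_prod:
  fixes \<beta> h :: "real \<Rightarrow> real"
  assumes "continuous_on {0..1} \<beta>" "continuous_on {0..1} h" "x \<in> {0..1::real}"
  shows "continuous_on {0..x} (\<lambda>y. \<beta> (x - y) * h y)"
proof -
  have "continuous_on {0..x} h" using assms(3) by (intro continuous_on_subset[OF assms(2)]) auto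
  then show ?thesis by (rule continuous_on_mult[OF cont_shift[OF assms(1,3)]])
qed

lemma Iop_bound:
  assumes cb: "continuous_on {0..1} \<beta>" and ch: "continuous_on {0..1} h"
    and bB: "\<And>y. y \<in> {0..1} \<Longrightarrow> \<bar>\<beta> y\<bar> \<le> B" and x: "x \<in> {0..1::real}"
  shows "\<bar>Iop \<beta> h x\<bar> \<le> B * integral {0..x} (\<lambda>y. \<bar>h y\<bar>)"
proof -
  have ch': "continuous_on {0..x} h" using x by (intro continuous_on_subset[OF ch]) auto
  have "norm (Iop \<beta> h x) \<le> integral {0..x} (\<lambda>y. B * \<bar>h y\<bar>)"
    unfolding Iop_def
  proof (rule integral_norm_bound_integral)
    show "(\<lambda>y. \<beta> (x - y) * h y) integrable_on {0..x}"
      by (intro integrable_continuous_interval cont_prod cb ch x)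
    show "(\<lambda>y. B * \<bar>h y\<bar>) integrable_on {0..x}"
      by (intro integrable_continuous_interval continuous_intros ch')
    fix y assume y: "y \<in> {0..x}"
    have "\<bar>\<beta> (x - y)\<bar> \<le> B" using x y by (intro bB) auto
    then show "norm (\<beta> (x - y) * h y) \<le> B * \<bar>h y\<bar>"
      by (simp add: abs_mult mult_right_mono)
  qed
  then show ?thesis by simp
qed

lemma Iop_lip_le:
  assumes cb: "continuous_on {0..1} \<beta>" and ch: "continuous_on {0..1} h"
    and lip: "L-lipschitz_on {0..1} \<beta>" and L: "L \<ge> 0"
    and bB: "\<And>y. y \<in> {0..1} \<Longrightarrow> \<bar>\<beta> y\<bar> \<le> B"
    and hM: "\<And>y. y \<in> {0..1} \<Longrightarrow> \<bar>h y\<bar> \<le> M" and M: "M \<ge> 0"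
    and x: "x \<in> {0..1::real}" and x': "x' \<in> {0..1}" and xx: "x \<le> x'"
  shows "\<bar>Iop \<beta> h x' - Iop \<beta> h x\<bar> \<le> (L * M + B * M) * (x' - x)"
proof -
  define f' where "f' = (\<lambda>y. \<beta> (x' - y) * h y)"
  define f where "f = (\<lambda>y. \<beta> (x - y) * h y)"
  have cf': "continuous_on {0..x'} f'" unfolding f'_def by (intro cont_prod cb ch x')
  have cf: "continuous_on {0..x} f" unfolding f_def by (intro cont_prod cb ch x)
  have cf'x: "continuous_on {0..x} f'" using xx by (intro continuous_on_subset[OF cf']) auto
  have cf'x2: "continuous_on {x..x'} f'" using x by (intro continuous_on_subset[OF cf']) auto
  have comb: "integral {0..x} f' + integral {x..x'} f' = integral {0..x'} f'"
    using x xx integrable_continuous_interval[OF cf'] by (intro Henstock_Kurzweil_Integration.integral_combine) auto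
  have diff: "integral {0..x} f' - integral {0..x} f = integral {0..x} (\<lambda>y. f' y - f y)"
    by (intro integral_diff[symmetric] integrable_continuous_interval cf cf'x)
  have "Iop \<beta> h x' - Iop \<beta> h x = integral {0..x} (\<lambda>y. f' y - f y) + integral {x..x'} f'"
    unfolding Iop_def f_def[symmetric] f'_def[symmetric] using comb diff by simp
  also have "\<bar>\<dots>\<bar> \<le> \<bar>integral {0..x} (\<lambda>y. f' y - f y)\<bar> + \<bar>integral {x..x'} f'\<bar>"
    by (rule abs_triangle_ineq)
  also have "\<bar>integral {0..x} (\<lambda>y. f' y - f y)\<bar> \<le> (L * (x' - x) * M) * (x - 0)"
  proof -
    have "norm (integral {0..x} (\<lambda>y. f' y - f y)) \<le> (L * (x' - x) * M) * (x - 0)"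
    proof (rule integral_bound)
      show "0 \<le> x" using x by simp
      show "continuous_on {0..x} (\<lambda>y. f' y - f y)" by (intro continuous_intros cf cf'x)
      fix t assume t: "t \<in> {0..x}"
      have "dist (\<beta> (x' - t)) (\<beta> (x - t)) \<le> L * dist (x' - t) (x - t)"
        using t x x' xx by (intro lipschitz_onD[OF lip]) auto
      then have b1: "\<bar>\<beta> (x' - t) - \<beta> (x - t)\<bar> \<le> L * (x' - x)"
        using xx by (simp add: dist_real_def)
      have b2: "\<bar>h t\<bar> \<le> M" using t x by (intro hM) auto
      have "\<bar>f' t - f t\<bar> = \<bar>\<beta> (x' - t) - \<beta> (x - t)\<bar> * \<bar>h t\<bar>"
        unfolding f_def f'_def by (simp add: abs_mult[symmetric] algebra_simps)
      also have "\<dots> \<le> (L * (x' - x)) * M"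
        using b1 b2 by (intro mult_mono) auto
      finally show "norm (f' t - f t) \<le> L * (x' - x) * M" by simp
    qed
    then show ?thesis by simp
  qed
  also have "(L * (x' - x) * M) * (x - 0) \<le> (L * (x' - x) * M) * 1"
    using x xx L M by (intro mult_left_mono) auto
  also have "\<bar>integral {x..x'} f'\<bar> \<le> (B * M) * (x' - x)"
  proof -
    have "norm (integral {x..x'} f') \<le> (B * M) * (x' - x)"
    proof (rule integral_bound)
      show "x \<le> x'" by fact
      show "continuous_on {x..x'} f'" by fact
      fix t assume t: "t \<in> {x..x'}"
      have "\<bar>\<beta> (x' - t)\<bar> \<le> B" using t x x' by (intro bB) auto
      moreover have "\<bar>h t\<bar> \<le> M" using t x x' by (intro hM) auto
      ultimately show "norm (f' t) \<le> B * M" unfolding f'_def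
        by (simp add: abs_mult mult_mono)
    qed
    then show ?thesis by simp
  qed
  finally show ?thesis by (simp add: algebra_simps)
qed

lemma Iop_cont:
  assumes cb: "continuous_on {0..1} \<beta>" and ch: "continuous_on {0..1} h"
    and lip: "L-lipschitz_on {0..1} \<beta>"
  shows "continuous_on {0..1} (Iop \<beta> h)"
proof -
  define B where "B = supnorm \<beta>"
  define M where "M = supnorm h"
  have bB: "\<And>y. y \<in> {0..1} \<Longrightarrow> \<bar>\<beta> y\<bar> \<le> B" unfolding B_def using supnorm_ge[OF cb] by blast
  have hM: "\<And>y. y \<in> {0..1} \<Longrightarrow> \<bar>h y\<bar> \<le> M" unfolding M_def using supnorm_ge[OF ch] by blast
  have M: "M \<ge> 0" unfolding M_def using supnorm_nonneg[OF ch] .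
  have L: "L \<ge> 0" using lip by (rule lipschitz_on_nonneg)
  have "(L * M + B * M)-lipschitz_on {0..1} (Iop \<beta> h)"
  proof (rule lipschitz_onI)
    show "0 \<le> L * M + B * M" using L M bB[of 0] by auto
    fix x y :: real assume xy: "x \<in> {0..1}" "y \<in> {0..1}"
    show "dist (Iop \<beta> h x) (Iop \<beta> h y) \<le> (L * M + B * M) * dist x y"
    proof (cases "x \<le> y")
      case True
      then show ?thesis using Iop_lip_le[OF cb ch lip L bB hM M xy(1) xy(2) True]
        by (simp add: dist_real_def abs_minus_commute)
    next
      case False
      then show ?thesis using Iop_lip_le[OF cb ch lip L bB hM M xy(2) xy(1)]
        by (simp add: dist_real_def abs_minus_commute)
    qed
  qed
  then show ?thesis by (rule lipschitz_on_continuous_on)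
qed

lemma int_pow:
  assumes "0 \<le> (x::real)"
  shows "integral {0..x} (\<lambda>y. y ^ m) = x ^ Suc m / real (Suc m)"
proof -
  have "((\<lambda>y. y ^ m) has_integral (x ^ Suc m / real (Suc m) - 0 ^ Suc m / real (Suc m))) {0..x}"
  proof (rule fundamental_theorem_of_calculus[OF assms])
    fix t assume "t \<in> {0..x}"
    have "((\<lambda>y. y ^ Suc m) has_real_derivative real (Suc m) * t ^ m) (at t within {0..x})"
      using DERIV_pow[of "Suc m" t] by simp
    then have "((\<lambda>y. y ^ Suc m / real (Suc m)) has_real_derivative
            (real (Suc m) * t ^ m) / real (Suc m)) (at t within {0..x})"
      by (rule DERIV_cdivide)
    then show "((\<lambda>y. y ^ Suc m / real (Suc m)) has_vector_derivative t ^ m) (at t within {0..x})"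
      by (simp add: has_real_derivative_iff_has_vector_derivative[symmetric] del: of_nat_Suc)
  qed
  then show ?thesis by (simp add: integral_unique)
qed

fun dseq :: "(real \<Rightarrow> real) \<Rightarrow> nat \<Rightarrow> real \<Rightarrow> real" where
  "dseq \<beta> 0 = (\<lambda>x. - \<beta> x)"
| "dseq \<beta> (Suc m) = Iop \<beta> (dseq \<beta> m)"

lemma dseq_cont:
  assumes cb: "continuous_on {0..1} \<beta>" and lip: "L-lipschitz_on {0..1} \<beta>"
  shows "continuous_on {0..1} (dseq \<beta> m)"
proof (induction m)
  case 0
  then show ?case using cb by (simp add: continuous_on_minus)
next
  case (Suc m)
  then show ?case using Iop_cont[OF cb Suc lip] by simp
qed

lemma dseq_bound:
  assumes cb: "continuous_on {0..1} \<beta>" and lip: "L-lipschitz_on {0..1} \<beta>"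
    and bB: "\<And>y. y \<in> {0..1} \<Longrightarrow> \<bar>\<beta> y\<bar> \<le> B" and B: "B \<ge> 0"
  shows "x \<in> {0..1} \<Longrightarrow> \<bar>dseq \<beta> m x\<bar> \<le> B ^ Suc m * x ^ m / fact m"
proof (induction m arbitrary: x)
  case 0
  then show ?case using bB by simp
next
  case (Suc m)
  have x: "x \<in> {0..1}" by fact
  have c: "continuous_on {0..1} (dseq \<beta> m)" by (rule dseq_cont[OF cb lip])
  have cx: "continuous_on {0..x} (dseq \<beta> m)" using x by (intro continuous_on_subset[OF c]) auto
  have "\<bar>dseq \<beta> (Suc m) x\<bar> \<le> B * integral {0..x} (\<lambda>y. \<bar>dseq \<beta> m y\<bar>)"
    using Iop_bound[OF cb c bB x] by simp
  also have "integral {0..x} (\<lambda>y. \<bar>dseq \<beta> m y\<bar>) \<le> integral {0..x} (\<lambda>y. B ^ Suc m / fact m * y ^ m)"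
  proof (rule integral_le)
    show "(\<lambda>y. \<bar>dseq \<beta> m y\<bar>) integrable_on {0..x}"
      by (intro integrable_continuous_interval continuous_intros cx)
    show "(\<lambda>y. B ^ Suc m / fact m * y ^ m) integrable_on {0..x}"
      by (intro integrable_continuous_interval continuous_intros)
    fix y assume "y \<in> {0..x}"
    then show "\<bar>dseq \<beta> m y\<bar> \<le> B ^ Suc m / fact m * y ^ m" using Suc.IH[of y] x by auto
  qed
  also have "integral {0..x} (\<lambda>y. B ^ Suc m / fact m * y ^ m) = B ^ Suc m / fact m * (x ^ Suc m / real (Suc m))"
    using int_pow[of x m] x by simp
  finally have "\<bar>dseq \<beta> (Suc m) x\<bar> \<le> B * (B ^ Suc m / fact m * (x ^ Suc m / real (Suc m)))"
    using B by (simp add: mult_left_mono)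
  also have "\<dots> = B ^ Suc (Suc m) * x ^ Suc m / fact (Suc m)"
    by (simp add: field_simps del: of_nat_Suc)
  finally show ?case .
qed

lemma kernel_exists:
  fixes \<beta> :: "real \<Rightarrow> real"
  assumes cb: "continuous_on {0..1} \<beta>" and lip: "L-lipschitz_on {0..1} \<beta>"
    and bB: "\<And>y. y \<in> {0..1} \<Longrightarrow> \<bar>\<beta> y\<bar> \<le> B" and B: "B \<ge> 0"
  shows "\<exists>k. continuous_on {0..1} k \<and> (\<forall>x\<in>{0..1}. k x = - \<beta> x + Iop \<beta> k x)"
proof -
  define d where "d = dseq \<beta>"
  define S where "S = (\<lambda>n x. \<Sum>i<n. d i x)"
  define k where "k = (\<lambda>x. \<Sum>i. d i x)"
  have cd: "\<And>i. continuous_on {0..1} (d i)" unfolding d_def by (rule dseq_cont[OF cb lip])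
  have cS: "\<And>n. continuous_on {0..1} (S n)" unfolding S_def
    by (intro continuous_on_sum cd)
  have ul: "uniform_limit {0..1} S k sequentially" unfolding S_def k_def
  proof (rule Weierstrass_m_test)
    fix i x assume x: "(x::real) \<in> {0..1}"
    have "\<bar>d i x\<bar> \<le> B ^ Suc i * x ^ i / fact i" unfolding d_def by (rule dseq_bound[OF cb lip bB B x])
    also have "\<dots> \<le> B ^ Suc i * 1 / fact i"
      using x B by (intro divide_right_mono mult_left_mono power_le_one) auto
    finally show "norm (d i x) \<le> B * (inverse (fact i) * B ^ i)" by (simp add: field_simps)
  next
    show "summable (\<lambda>i. B * (inverse (fact i) * B ^ i))"
      by (intro summable_mult summable_exp)
  qed
  have ck: "continuous_on {0..1} k"
    by (rule uniform_limit_theorem[OF _ ul]) (auto simp: cS)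
  have eq: "k x = - \<beta> x + Iop \<beta> k x" if x: "x \<in> {0..1}" for x
  proof -
    have step: "S (Suc n) x = - \<beta> x + Iop \<beta> (S n) x" for n
    proof -
      have "S (Suc n) x = d 0 x + (\<Sum>i<n. d (Suc i) x)"
        unfolding S_def by (subst sum.lessThan_Suc_shift) simp
      also have "(\<Sum>i<n. d (Suc i) x) = (\<Sum>i<n. integral {0..x} (\<lambda>y. \<beta> (x - y) * d i y))"
        unfolding d_def by (simp add: Iop_def)
      also have "\<dots> = integral {0..x} (\<lambda>y. \<Sum>i<n. \<beta> (x - y) * d i y)"
        by (rule integral_sum[symmetric]) (auto intro!: integrable_continuous_interval cont_prod cb cd x)
      also have "\<dots> = Iop \<beta> (S n) x" unfolding Iop_def S_def by (simp add: sum_distrib_left)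
      finally show ?thesis unfolding d_def by simp
    qed
    have l1: "(\<lambda>n. S (Suc n) x) \<longlonglongrightarrow> k x"
      using tendsto_uniform_limitI[OF ul x] by (rule LIMSEQ_Suc)
    have l2: "(\<lambda>n. Iop \<beta> (S n) x) \<longlonglongrightarrow> Iop \<beta> k x"
    proof (rule tendstoI)
      fix e :: real assume e: "e > 0"
      define e' where "e' = e / (B + 1)"
      have e': "e' > 0" unfolding e'_def using e B by auto
      from uniform_limitD[OF ul e']
      show "\<forall>\<^sub>F n in sequentially. dist (Iop \<beta> (S n) x) (Iop \<beta> k x) < e"
      proof eventually_elim
        case (elim n)
        have i1: "(\<lambda>y. \<beta> (x - y) * S n y) integrable_on {0..x}"
          by (intro integrable_continuous_interval cont_prod cb cS x)
        have i2: "(\<lambda>y. \<beta> (x - y) * k y) integrable_on {0..x}"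
          by (intro integrable_continuous_interval cont_prod cb ck x)
        have "Iop \<beta> (S n) x - Iop \<beta> k x = integral {0..x} (\<lambda>y. \<beta> (x - y) * S n y - \<beta> (x - y) * k y)"
          unfolding Iop_def by (rule integral_diff[symmetric, OF i1 i2])
        also have "\<dots> = integral {0..x} (\<lambda>y. \<beta> (x - y) * (S n y - k y))"
          by (simp add: right_diff_distrib)
        also have "norm \<dots> \<le> (B * e') * (x - 0)"
        proof (rule integral_bound)
          show "0 \<le> x" using x by simp
          have "continuous_on {0..1} (\<lambda>y. S n y - k y)" by (intro continuous_intros cS ck)
          then show "continuous_on {0..x} (\<lambda>y. \<beta> (x - y) * (S n y - k y))"
            by (intro cont_prod cb x)
          fix t assume t: "t \<in> {0..x}"
          have "\<bar>\<beta> (x - t)\<bar> \<le> B" using t x by (intro bB) auto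
          moreover have "\<bar>S n t - k t\<bar> < e'" using elim t x by (auto simp: dist_real_def)
          ultimately show "norm (\<beta> (x - t) * (S n t - k t)) \<le> B * e'"
            by (simp add: abs_mult mult_mono)
        qed
        also have "(B * e') * (x - 0) \<le> (B * e') * 1"
          using x B e' by (intro mult_left_mono) auto
        also have "B * e' < e" unfolding e'_def using e B by (simp add: field_simps)
        finally show ?case by (simp add: dist_real_def)
      qed
    qed
    have "(\<lambda>n. S (Suc n) x) \<longlonglongrightarrow> - \<beta> x + Iop \<beta> k x"
      unfolding step by (intro tendsto_intros l2)
    with l1 show ?thesis by (rule LIMSEQ_unique)
  qed
  show ?thesis using ck eq by blast
qed

lemma Iop_diff:
  fixes \<beta> :: "real \<Rightarrow> real"
  assumes cb: "continuous_on {0..1} \<beta>" and c1: "continuous_on {0..1} h1"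
    and c2: "continuous_on {0..1} h2" and x: "x \<in> {0..1}"
  shows "Iop \<beta> h1 x - Iop \<beta> h2 x = Iop \<beta> (\<lambda>y. h1 y - h2 y) x"
proof -
  have i1: "(\<lambda>y. \<beta> (x - y) * h1 y) integrable_on {0..x}"
    by (intro integrable_continuous_interval cont_prod cb c1 x)
  have i2: "(\<lambda>y. \<beta> (x - y) * h2 y) integrable_on {0..x}"
    by (intro integrable_continuous_interval cont_prod cb c2 x)
  have "Iop \<beta> h1 x - Iop \<beta> h2 x = integral {0..x} (\<lambda>y. \<beta> (x - y) * h1 y - \<beta> (x - y) * h2 y)"
    unfolding Iop_def by (rule integral_diff[symmetric, OF i1 i2])
  also have "\<dots> = Iop \<beta> (\<lambda>y. h1 y - h2 y) x"
    unfolding Iop_def by (simp add: right_diff_distrib)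
  finally show ?thesis .
qed

definition kpred :: "(real \<Rightarrow> real) \<Rightarrow> (real \<Rightarrow> real) \<Rightarrow> bool" where
  "kpred \<beta> k = (continuous_on {0..1} k \<and>
      (\<forall>x\<in>{0..1}. k x = - \<beta> x + integral {0..x} (\<lambda>y. \<beta> (x - y) * k y)) \<and>
      (\<forall>x. x \<notin> {0..1} \<longrightarrow> k x = 0))"

lemma kernel_props:
  fixes \<beta> :: "real \<Rightarrow> real"
  assumes cb: "continuous_on {0..1} \<beta>" and lip: "L-lipschitz_on {0..1} \<beta>"
    and bB: "\<And>y. y \<in> {0..1} \<Longrightarrow> \<bar>\<beta> y\<bar> \<le> B" and B: "B \<ge> 0"
  shows "continuous_on {0..1} (kernel_op \<beta>)"
    and "\<forall>x\<in>{0..1}. kernel_op \<beta> x = - \<beta> x + Iop \<beta> (kernel_op \<beta>) x"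
proof -
  obtain k where ck: "continuous_on {0..1} k" and ek: "\<forall>x\<in>{0..1}. k x = - \<beta> x + Iop \<beta> k x"
    using kernel_exists[OF cb lip bB B] by blast
  define k0 where "k0 = (\<lambda>x. if x \<in> {0..1} then k x else 0)"
  have ck0: "continuous_on {0..1} k0" unfolding k0_def using ck by (rule continuous_on_eq) auto
  have Ieq: "Iop \<beta> k0 x = Iop \<beta> k x" if x: "x \<in> {0..1}" for x
    unfolding Iop_def using x by (intro integral_cong) (auto simp: k0_def)
  have P0: "kpred \<beta> k0" unfolding kpred_def
    using ck0 ek Ieq by (auto simp: Iop_def[symmetric]) (auto simp: k0_def)
  have uniq: "k1 = k2" if p1: "kpred \<beta> k1" and p2: "kpred \<beta> k2" for k1 k2
  proof
    fix x
    show "k1 x = k2 x"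
    proof (cases "x \<in> {0..1}")
      case False
      then show ?thesis using p1 p2 unfolding kpred_def by auto
    next
      case True
      have c1: "continuous_on {0..1} k1" and c2: "continuous_on {0..1} k2"
        using p1 p2 unfolding kpred_def by auto
      have e1: "\<And>x. x \<in> {0..1} \<Longrightarrow> k1 x = - \<beta> x + Iop \<beta> k1 x"
        using p1 unfolding kpred_def Iop_def by auto
      have e2: "\<And>x. x \<in> {0..1} \<Longrightarrow> k2 x = - \<beta> x + Iop \<beta> k2 x"
        using p2 unfolding kpred_def Iop_def by auto
      have cd: "continuous_on {0..1} (\<lambda>y. k1 y - k2 y)" by (intro continuous_intros c1 c2)
      have "\<bar>k1 x - k2 x\<bar> \<le> 0 * exp (B * x)"
      proof (rule gronwall[where d = "\<lambda>y. \<bar>k1 y - k2 y\<bar>"])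
        show "continuous_on {0..1} (\<lambda>y. \<bar>k1 y - k2 y\<bar>)" by (intro continuous_intros c1 c2)
        fix t :: real assume t: "t \<in> {0..1}"
        have "\<bar>k1 t - k2 t\<bar> = \<bar>Iop \<beta> k1 t - Iop \<beta> k2 t\<bar>" using e1[OF t] e2[OF t] by simp
        also have "\<dots> = \<bar>Iop \<beta> (\<lambda>y. k1 y - k2 y) t\<bar>" using Iop_diff[OF cb c1 c2 t] by simp
        also have "\<dots> \<le> B * integral {0..t} (\<lambda>y. \<bar>k1 y - k2 y\<bar>)" by (rule Iop_bound[OF cb cd bB t])
        finally show "\<bar>k1 t - k2 t\<bar> \<le> 0 + B * integral {0..t} (\<lambda>y. \<bar>k1 y - k2 y\<bar>)" by simp
      qed (use B True in auto)
      then show ?thesis by simp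
    qed
  qed
  have ex1: "\<exists>!k. kpred \<beta> k" using P0 uniq by blast
  have kdef: "kernel_op \<beta> = (THE k. kpred \<beta> k)" unfolding kernel_op_def kpred_def ..
  have P: "kpred \<beta> (kernel_op \<beta>)" unfolding kdef by (rule theI'[OF ex1])
  show "continuous_on {0..1} (kernel_op \<beta>)" using P unfolding kpred_def by auto
  show "\<forall>x\<in>{0..1}. kernel_op \<beta> x = - \<beta> x + Iop \<beta> (kernel_op \<beta>) x"
    using P unfolding kpred_def Iop_def by auto
qed

lemma kernel_bound:
  fixes \<beta> :: "real \<Rightarrow> real"
  assumes cb: "continuous_on {0..1} \<beta>" and lip: "L-lipschitz_on {0..1} \<beta>"
    and bB: "\<And>y. y \<in> {0..1} \<Longrightarrow> \<bar>\<beta> y\<bar> \<le> B" and B: "B \<ge> 0"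
    and x: "x \<in> {0..1}"
  shows "\<bar>kernel_op \<beta> x\<bar> \<le> B * exp B"
proof -
  note kp = kernel_props[OF cb lip bB B]
  have "\<bar>kernel_op \<beta> x\<bar> \<le> B * exp (B * x)"
  proof (rule gronwall[where d = "\<lambda>y. \<bar>kernel_op \<beta> y\<bar>"])
    show "continuous_on {0..1} (\<lambda>y. \<bar>kernel_op \<beta> y\<bar>)" by (intro continuous_intros kp(1))
    fix t :: real assume t: "t \<in> {0..1}"
    have "\<bar>kernel_op \<beta> t\<bar> \<le> \<bar>\<beta> t\<bar> + \<bar>Iop \<beta> (kernel_op \<beta>) t\<bar>" using bspec[OF kp(2) t] by simp
    also have "\<dots> \<le> B + B * integral {0..t} (\<lambda>y. \<bar>kernel_op \<beta> y\<bar>)"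
      using bB[OF t] Iop_bound[OF cb kp(1) bB t] by linarith
    finally show "\<bar>kernel_op \<beta> t\<bar> \<le> B + B * integral {0..t} (\<lambda>y. \<bar>kernel_op \<beta> y\<bar>)" .
  qed (use B x in auto)
  also have "\<dots> \<le> B * exp B" using B x by (intro mult_left_mono) (auto simp: mult_left_le)
  finally show ?thesis .
qed

lemma exp_ineq:
  assumes "(B::real) \<ge> 0"
  shows "(1 + B * exp B) * exp B \<le> exp (3 * B)"
proof -
  have "1 + B \<le> exp B" by (rule exp_ge_add_one_self)
  then have "exp B * (1 + B) \<le> exp B * exp B" by (intro mult_left_mono) auto
  moreover have "1 \<le> exp B" using assms by simp
  moreover have "exp B * (1 + B) = exp B + B * exp B" by (simp add: algebra_simps)
  ultimately have "1 + B * exp B \<le> exp B * exp B" by linarith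
  then have "(1 + B * exp B) * exp B \<le> (exp B * exp B) * exp B" by (intro mult_right_mono) auto
  also have "\<dots> = exp (3 * B)" by (simp add: exp_add[symmetric])
  finally show ?thesis .
qed

lemma cont_refl:
  fixes k :: "real \<Rightarrow> real"
  assumes "continuous_on {0..1} k"
  shows "continuous_on {0..1} (\<lambda>y. k (1 - y))"
  by (rule continuous_on_compose2[OF assms, of "{0..1}" "\<lambda>y. 1 - y"])
     (auto intro!: continuous_intros)

theorem lemma4:
  fixes \<beta>1 \<beta>2 u1 u2 :: "real \<Rightarrow> real" and B\<beta> Bu :: real
  assumes "B\<beta> > 0" and "Bu > 0"
    and "\<exists>L. L-lipschitz_on {0..1} \<beta>1" and "\<exists>L. L-lipschitz_on {0..1} \<beta>2"
    and "\<exists>L. L-lipschitz_on {0..1} u1" and "\<exists>L. L-lipschitz_on {0..1} u2"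
    and "supnorm \<beta>1 \<le> B\<beta>" and "supnorm \<beta>2 \<le> B\<beta>"
    and "supnorm u1 \<le> Bu" and "supnorm u2 \<le> Bu"
  shows "\<bar>U_op \<beta>1 u1 - U_op \<beta>2 u2\<bar>
    \<le> (B\<beta> * exp B\<beta> + Bu * exp (3 * B\<beta>)) *
       max (supnorm (\<lambda>x. \<beta>1 x - \<beta>2 x)) (supnorm (\<lambda>x. u1 x - u2 x))"
proof -
  define B where "B = B\<beta>"
  have B: "B \<ge> 0" using assms(1) unfolding B_def by simp
  obtain L1 where l1: "L1-lipschitz_on {0..1} \<beta>1" using assms(3) by blast
  obtain L2 where l2: "L2-lipschitz_on {0..1} \<beta>2" using assms(4) by blast
  obtain M1 where m1: "M1-lipschitz_on {0..1} u1" using assms(5) by blast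
  obtain M2 where m2: "M2-lipschitz_on {0..1} u2" using assms(6) by blast
  have cb1: "continuous_on {0..1} \<beta>1" using l1 by (rule lipschitz_on_continuous_on)
  have cb2: "continuous_on {0..1} \<beta>2" using l2 by (rule lipschitz_on_continuous_on)
  have cu1: "continuous_on {0..1} u1" using m1 by (rule lipschitz_on_continuous_on)
  have cu2: "continuous_on {0..1} u2" using m2 by (rule lipschitz_on_continuous_on)
  have bB1: "\<And>y. y \<in> {0..1} \<Longrightarrow> \<bar>\<beta>1 y\<bar> \<le> B"
    using supnorm_ge[OF cb1] assms(7) unfolding B_def by fastforce
  have bB2: "\<And>y. y \<in> {0..1} \<Longrightarrow> \<bar>\<beta>2 y\<bar> \<le> B"
    using supnorm_ge[OF cb2] assms(8) unfolding B_def by fastforce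
  have bu1: "\<And>y. y \<in> {0..1} \<Longrightarrow> \<bar>u1 y\<bar> \<le> Bu"
    using supnorm_ge[OF cu1] assms(9) by fastforce
  define \<delta> where "\<delta> = supnorm (\<lambda>x. \<beta>1 x - \<beta>2 x)"
  define \<delta>u where "\<delta>u = supnorm (\<lambda>x. u1 x - u2 x)"
  have c\<delta>: "continuous_on {0..1} (\<lambda>x. \<beta>1 x - \<beta>2 x)" by (intro continuous_intros cb1 cb2)
  have c\<delta>u: "continuous_on {0..1} (\<lambda>x. u1 x - u2 x)" by (intro continuous_intros cu1 cu2)
  have b\<delta>: "\<And>y. y \<in> {0..1} \<Longrightarrow> \<bar>\<beta>1 y - \<beta>2 y\<bar> \<le> \<delta>"
    unfolding \<delta>_def using supnorm_ge[OF c\<delta>] by fastforce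
  have b\<delta>u: "\<And>y. y \<in> {0..1} \<Longrightarrow> \<bar>u1 y - u2 y\<bar> \<le> \<delta>u"
    unfolding \<delta>u_def using supnorm_ge[OF c\<delta>u] by fastforce
  have \<delta>0: "\<delta> \<ge> 0" unfolding \<delta>_def by (rule supnorm_nonneg[OF c\<delta>])
  have \<delta>u0: "\<delta>u \<ge> 0" unfolding \<delta>u_def by (rule supnorm_nonneg[OF c\<delta>u])
  define k1 where "k1 = kernel_op \<beta>1"
  define k2 where "k2 = kernel_op \<beta>2"
  note kp1 = kernel_props[OF cb1 l1 bB1 B, folded k1_def]
  note kp2 = kernel_props[OF cb2 l2 bB2 B, folded k2_def]
  have kb1: "\<And>x. x \<in> {0..1} \<Longrightarrow> \<bar>k1 x\<bar> \<le> B * exp B"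
    unfolding k1_def by (rule kernel_bound[OF cb1 l1 bB1 B])
  have kb2: "\<And>x. x \<in> {0..1} \<Longrightarrow> \<bar>k2 x\<bar> \<le> B * exp B"
    unfolding k2_def by (rule kernel_bound[OF cb2 l2 bB2 B])
  have ck1: "continuous_on {0..1} k1" by (rule kp1(1))
  have ck2: "continuous_on {0..1} k2" by (rule kp2(1))
  have ckd: "continuous_on {0..1} (\<lambda>y. k1 y - k2 y)" by (intro continuous_intros ck1 ck2)
  have D: "\<bar>k1 x - k2 x\<bar> \<le> \<delta> * exp (3 * B)" if x: "x \<in> {0..1}" for x
  proof -
    have "\<bar>k1 x - k2 x\<bar> \<le> (\<delta> * (1 + B * exp B)) * exp (B * x)"
    proof (rule gronwall[where d = "\<lambda>y. \<bar>k1 y - k2 y\<bar>"])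
      show "continuous_on {0..1} (\<lambda>y. \<bar>k1 y - k2 y\<bar>)" by (intro continuous_intros ck1 ck2)
      fix t :: real assume t: "t \<in> {0..1}"
      have split: "Iop \<beta>1 k1 t - Iop \<beta>2 k2 t
          = Iop (\<lambda>s. \<beta>1 s - \<beta>2 s) k1 t + Iop \<beta>2 (\<lambda>y. k1 y - k2 y) t"
      proof -
        have i1: "(\<lambda>y. \<beta>1 (t - y) * k1 y) integrable_on {0..t}"
          by (intro integrable_continuous_interval cont_prod cb1 ck1 t)
        have i2: "(\<lambda>y. \<beta>2 (t - y) * k2 y) integrable_on {0..t}"
          by (intro integrable_continuous_interval cont_prod cb2 ck2 t)
        have i3: "(\<lambda>y. (\<beta>1 (t - y) - \<beta>2 (t - y)) * k1 y) integrable_on {0..t}"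
          using integrable_continuous_interval[OF cont_prod[OF c\<delta> ck1 t]] by simp
        have i4: "(\<lambda>y. \<beta>2 (t - y) * (k1 y - k2 y)) integrable_on {0..t}"
          by (intro integrable_continuous_interval cont_prod cb2 ckd t)
        have "Iop \<beta>1 k1 t - Iop \<beta>2 k2 t = integral {0..t} (\<lambda>y. \<beta>1 (t - y) * k1 y - \<beta>2 (t - y) * k2 y)"
          unfolding Iop_def by (rule integral_diff[symmetric, OF i1 i2])
        also have "\<dots> = integral {0..t} (\<lambda>y. (\<beta>1 (t - y) - \<beta>2 (t - y)) * k1 y + \<beta>2 (t - y) * (k1 y - k2 y))"
          by (simp add: algebra_simps)
        also have "\<dots> = Iop (\<lambda>s. \<beta>1 s - \<beta>2 s) k1 t + Iop \<beta>2 (\<lambda>y. k1 y - k2 y) t"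
          unfolding Iop_def by (rule integral_add[OF i3 i4])
        finally show ?thesis .
      qed
      have A: "\<bar>Iop (\<lambda>s. \<beta>1 s - \<beta>2 s) k1 t\<bar> \<le> \<delta> * (B * exp B)"
      proof -
        have "norm (Iop (\<lambda>s. \<beta>1 s - \<beta>2 s) k1 t) \<le> (\<delta> * (B * exp B)) * (t - 0)"
          unfolding Iop_def
        proof (rule integral_bound)
          show "0 \<le> t" using t by simp
          show "continuous_on {0..t} (\<lambda>y. (\<beta>1 (t - y) - \<beta>2 (t - y)) * k1 y)"
            using cont_prod[OF c\<delta> ck1 t] by simp
          fix y assume y: "y \<in> {0..t}"
          have "\<bar>\<beta>1 (t - y) - \<beta>2 (t - y)\<bar> \<le> \<delta>" using y t by (intro b\<delta>) auto
          moreover have "\<bar>k1 y\<bar> \<le> B * exp B" using y t by (intro kb1) auto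
          ultimately show "norm ((\<beta>1 (t - y) - \<beta>2 (t - y)) * k1 y) \<le> \<delta> * (B * exp B)"
            by (simp add: abs_mult mult_mono \<delta>0)
        qed
        also have "\<dots> \<le> (\<delta> * (B * exp B)) * 1" using t \<delta>0 B by (intro mult_left_mono) auto
        finally show ?thesis by simp
      qed
      have C: "\<bar>Iop \<beta>2 (\<lambda>y. k1 y - k2 y) t\<bar> \<le> B * integral {0..t} (\<lambda>y. \<bar>k1 y - k2 y\<bar>)"
        by (rule Iop_bound[OF cb2 ckd bB2 t])
      have "k1 t - k2 t = - (\<beta>1 t - \<beta>2 t) + (Iop \<beta>1 k1 t - Iop \<beta>2 k2 t)"
        using bspec[OF kp1(2) t] bspec[OF kp2(2) t] by simp
      then have "\<bar>k1 t - k2 t\<bar> \<le> \<bar>\<beta>1 t - \<beta>2 t\<bar> + \<bar>Iop (\<lambda>s. \<beta>1 s - \<beta>2 s) k1 t\<bar>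
            + \<bar>Iop \<beta>2 (\<lambda>y. k1 y - k2 y) t\<bar>" unfolding split by linarith
      also have "\<dots> \<le> \<delta> + \<delta> * (B * exp B) + B * integral {0..t} (\<lambda>y. \<bar>k1 y - k2 y\<bar>)"
        using b\<delta>[OF t] A C by linarith
      finally show "\<bar>k1 t - k2 t\<bar> \<le> \<delta> * (1 + B * exp B) + B * integral {0..t} (\<lambda>y. \<bar>k1 y - k2 y\<bar>)"
        by (simp add: algebra_simps)
    qed (use B x \<delta>0 in auto)
    also have "\<dots> \<le> (\<delta> * (1 + B * exp B)) * exp B"
      using x B \<delta>0 by (intro mult_left_mono) (auto simp: mult_left_le)
    also have "\<dots> = \<delta> * ((1 + B * exp B) * exp B)" by simp
    also have "\<dots> \<le> \<delta> * exp (3 * B)" using exp_ineq[OF B] \<delta>0 by (rule mult_left_mono)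
    finally show ?thesis .
  qed
  have cr1: "continuous_on {0..1} (\<lambda>y. k1 (1 - y))" by (rule cont_refl[OF ck1])
  have cr2: "continuous_on {0..1} (\<lambda>y. k2 (1 - y))" by (rule cont_refl[OF ck2])
  have j1: "(\<lambda>y. k1 (1 - y) * u1 y) integrable_on {0..1}"
    by (intro integrable_continuous_interval continuous_intros cr1 cu1)
  have j2: "(\<lambda>y. k2 (1 - y) * u2 y) integrable_on {0..1}"
    by (intro integrable_continuous_interval continuous_intros cr2 cu2)
  have j3: "(\<lambda>y. (k1 (1 - y) - k2 (1 - y)) * u1 y) integrable_on {0..1}"
    by (intro integrable_continuous_interval continuous_intros cr1 cr2 cu1)
  have j4: "(\<lambda>y. k2 (1 - y) * (u1 y - u2 y)) integrable_on {0..1}"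
    by (intro integrable_continuous_interval continuous_intros cr2 cu1 cu2)
  have "U_op \<beta>1 u1 - U_op \<beta>2 u2 = integral {0..1} (\<lambda>y. k1 (1 - y) * u1 y - k2 (1 - y) * u2 y)"
    unfolding U_op_def k1_def[symmetric] k2_def[symmetric] by (rule integral_diff[symmetric, OF j1 j2])
  also have "\<dots> = integral {0..1} (\<lambda>y. (k1 (1 - y) - k2 (1 - y)) * u1 y + k2 (1 - y) * (u1 y - u2 y))"
    by (simp add: algebra_simps)
  also have "\<dots> = integral {0..1} (\<lambda>y. (k1 (1 - y) - k2 (1 - y)) * u1 y)
      + integral {0..1} (\<lambda>y. k2 (1 - y) * (u1 y - u2 y))"
    by (rule integral_add[OF j3 j4])
  finally have eqU: "U_op \<beta>1 u1 - U_op \<beta>2 u2 = integral {0..1} (\<lambda>y. (k1 (1 - y) - k2 (1 - y)) * u1 y)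
      + integral {0..1} (\<lambda>y. k2 (1 - y) * (u1 y - u2 y))" .
  have T1: "norm (integral {0..1} (\<lambda>y. (k1 (1 - y) - k2 (1 - y)) * u1 y)) \<le> (\<delta> * exp (3 * B) * Bu) * (1 - 0)"
  proof (rule integral_bound)
    show "continuous_on {0..1} (\<lambda>y. (k1 (1 - y) - k2 (1 - y)) * u1 y)"
      by (intro continuous_intros cr1 cr2 cu1)
    fix y :: real assume y: "y \<in> {0..1}"
    have "\<bar>k1 (1 - y) - k2 (1 - y)\<bar> \<le> \<delta> * exp (3 * B)" using y by (intro D) auto
    moreover have "\<bar>u1 y\<bar> \<le> Bu" using y by (rule bu1)
    ultimately show "norm ((k1 (1 - y) - k2 (1 - y)) * u1 y) \<le> \<delta> * exp (3 * B) * Bu"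
      by (simp add: abs_mult mult_mono \<delta>0)
  qed simp
  have T2: "norm (integral {0..1} (\<lambda>y. k2 (1 - y) * (u1 y - u2 y))) \<le> (B * exp B * \<delta>u) * (1 - 0)"
  proof (rule integral_bound)
    show "continuous_on {0..1} (\<lambda>y. k2 (1 - y) * (u1 y - u2 y))"
      by (intro continuous_intros cr2 cu1 cu2)
    fix y :: real assume y: "y \<in> {0..1}"
    have "\<bar>k2 (1 - y)\<bar> \<le> B * exp B" using y by (intro kb2) auto
    moreover have "\<bar>u1 y - u2 y\<bar> \<le> \<delta>u" using y by (rule b\<delta>u)
    ultimately show "norm (k2 (1 - y) * (u1 y - u2 y)) \<le> B * exp B * \<delta>u"
      by (simp add: abs_mult mult_mono B)
  qed simp
  have "\<bar>U_op \<beta>1 u1 - U_op \<beta>2 u2\<bar> \<le> \<delta> * exp (3 * B) * Bu + B * exp B * \<delta>u"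
    unfolding eqU using T1 T2 by simp
  also have "\<dots> \<le> Bu * exp (3 * B) * max \<delta> \<delta>u + B * exp B * max \<delta> \<delta>u"
  proof (intro add_mono)
    show "\<delta> * exp (3 * B) * Bu \<le> Bu * exp (3 * B) * max \<delta> \<delta>u"
      using assms(2) by (simp add: mult.commute mult.left_commute mult_left_mono)
    show "B * exp B * \<delta>u \<le> B * exp B * max \<delta> \<delta>u" using B by (simp add: mult_left_mono)
  qed
  also have "\<dots> = (B\<beta> * exp B\<beta> + Bu * exp (3 * B\<beta>)) *
       max (supnorm (\<lambda>x. \<beta>1 x - \<beta>2 x)) (supnorm (\<lambda>x. u1 x - u2 x))"
    unfolding B_def \<delta>_def \<delta>u_def by (simp add: algebra_simps)
  finally show ?thesis .
qed

end
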